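(* Let $R$ be a commutative ring, $\vartheta$ any one of the four types (left, right, pre-two-sided, two-sided), and $\mathcal A$ an $R$-algebra which is integral over $R$ and in which every element is either invertible or nilpotent. Then $\mathcal A$ is a $\vartheta$-quasi-stable $R$-algebra.
   Context: Algebras are associative and unital. $\mathcal A$ is integral over $R$ if every element is a root of a monic polynomial with coefficients in $R$. An $R$-submodule $V$ of $\mathcal A$ is a left (resp. right) Mathieu subspace if whenever $a^m\in V$ for all $m\ge1$, then for every $b\in\mathcal A$, $ba^m\in V$ (resp. $a^mb\in V$) for all sufficiently large $m$; pre-two-sided if both left and right; two-sided if whenever $a^m\in V$ for all $m\ge1$, for all $b,c\in\mathcal A$, $ba^mc\in V$ for all sufficiently large $m$. $\mathcal A$ is $\vartheta$-quasi-stable if every $R$-submodule $V$ of $\mathcal A$ with $1\notin V$ is a $\vartheta$-Mathieu subspace of $\mathcal A$. *)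

theory Defs
  imports Main
begin

text \<open>An (associative, unital) R-algebra structure on a ring 'a is given by its
structure map phi : R -> A, a unital ring homomorphism whose image is central.\<close>
definition algebra_map :: "('r::comm_ring_1 \<Rightarrow> 'a::ring_1) \<Rightarrow> bool" where
  "algebra_map phi \<longleftrightarrow>
     phi 1 = 1 \<and> (\<forall>x y. phi (x + y) = phi x + phi y) \<and>
     (\<forall>x y. phi (x * y) = phi x * phi y) \<and>
     (\<forall>r a. phi r * a = a * phi r)"

definition r_submodule :: "('r::comm_ring_1 \<Rightarrow> 'a::ring_1) \<Rightarrow> 'a set \<Rightarrow> bool" where
  "r_submodule phi V \<longleftrightarrow>
     0 \<in> V \<and> (\<forall>u\<in>V. \<forall>v\<in>V. u + v \<in> V) \<and> (\<forall>r. \<forall>v\<in>V. phi r * v \<in> V)"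

definition integral_over :: "('r::comm_ring_1 \<Rightarrow> 'a::ring_1) \<Rightarrow> bool" where
  "integral_over phi \<longleftrightarrow>
     (\<forall>a::'a. \<exists>(n::nat) (c::nat \<Rightarrow> 'r). a ^ n + (\<Sum>i<n. phi (c i) * a ^ i) = 0)"

definition invertible_elem :: "'a::ring_1 \<Rightarrow> bool" where
  "invertible_elem a \<longleftrightarrow> (\<exists>b. a * b = 1 \<and> b * a = 1)"

definition nilpotent_elem :: "'a::ring_1 \<Rightarrow> bool" where
  "nilpotent_elem a \<longleftrightarrow> (\<exists>n::nat. a ^ n = 0)"

datatype mathieu_type = LeftM | RightM | PreTwoSidedM | TwoSidedM

definition left_mathieu :: "'a::ring_1 set \<Rightarrow> bool" where
  "left_mathieu V \<longleftrightarrow> (\<forall>a. (\<forall>m\<ge>1. a ^ m \<in> V) \<longrightarrow>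
      (\<forall>b. \<exists>N. \<forall>m\<ge>N. b * a ^ m \<in> V))"

definition right_mathieu :: "'a::ring_1 set \<Rightarrow> bool" where
  "right_mathieu V \<longleftrightarrow> (\<forall>a. (\<forall>m\<ge>1. a ^ m \<in> V) \<longrightarrow>
      (\<forall>b. \<exists>N. \<forall>m\<ge>N. a ^ m * b \<in> V))"

definition two_sided_mathieu :: "'a::ring_1 set \<Rightarrow> bool" where
  "two_sided_mathieu V \<longleftrightarrow> (\<forall>a. (\<forall>m\<ge>1. a ^ m \<in> V) \<longrightarrow>
      (\<forall>b c. \<exists>N. \<forall>m\<ge>N. b * a ^ m * c \<in> V))"

fun mathieu :: "mathieu_type \<Rightarrow> 'a::ring_1 set \<Rightarrow> bool" where
  "mathieu LeftM V = left_mathieu V"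
| "mathieu RightM V = right_mathieu V"
| "mathieu PreTwoSidedM V = (left_mathieu V \<and> right_mathieu V)"
| "mathieu TwoSidedM V = two_sided_mathieu V"

definition quasi_stable :: "mathieu_type \<Rightarrow> ('r::comm_ring_1 \<Rightarrow> 'a::ring_1) \<Rightarrow> bool" where
  "quasi_stable \<theta> phi \<longleftrightarrow> (\<forall>V. r_submodule phi V \<and> 1 \<notin> V \<longrightarrow> mathieu \<theta> V)"

end

theory Submission
  imports Defs
begin

lemma pow_inv: fixes a b :: "'a::ring_1" assumes "a * b = 1" shows "a ^ i * b ^ i = 1"
proof (induction i)
  case (Suc i)
  have "a ^ Suc i * b ^ Suc i = a * (a ^ i * b ^ i) * b"
    unfolding power_Suc[of a] power_Suc2[of b] by (simp only: mult.assoc)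
  also have "\<dots> = 1" using Suc assms by simp
  finally show ?case .
qed simp

lemma phi_neg: assumes "algebra_map phi" shows "phi (- c) = - phi c"
proof -
  have add: "\<And>x y. phi (x + y) = phi x + phi y" using assms unfolding algebra_map_def by blast
  have "phi 0 = phi 0 + phi 0" using add[of 0 0] by simp
  hence z: "phi 0 = 0" by simp
  have "phi (c + - c) = phi c + phi (- c)" by (rule add)
  thus ?thesis using z by (simp add: eq_neg_iff_add_eq_0 add.commute)
qed

lemma sum_in: assumes "r_submodule phi V" and "\<And>i. i \<in> S \<Longrightarrow> f i \<in> V" and "finite S"
  shows "sum f S \<in> V"
  using assms(3,2)
proof (induction S rule: finite_induct)
  case empty thus ?case using assms(1) unfolding r_submodule_def by simp
next
  case (insert x F) thus ?case using assms(1) unfolding r_submodule_def by simp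
qed

lemma inv_case:
  fixes phi :: "'r::comm_ring_1 \<Rightarrow> 'a::ring_1"
  assumes am: "algebra_map phi" and io: "integral_over phi" and sm: "r_submodule phi V"
    and ab: "a * b = 1" "b * a = 1" and pw: "\<forall>m\<ge>1. a ^ m \<in> V"
  shows "(1::'a) \<in> V"
proof -
  obtain n c where e: "b ^ n + (\<Sum>i<n. phi (c i) * b ^ i) = 0"
    using io unfolding integral_over_def by blast
  have comm: "\<And>r x. phi r * x = x * phi r" using am unfolding algebra_map_def by blast
  have mul: "\<And>x y. phi (x * y) = phi x * phi y" using am unfolding algebra_map_def by blast
  have "a ^ n * (b ^ n + (\<Sum>i<n. phi (c i) * b ^ i)) = 0" using e by simp
  hence "1 + (\<Sum>i<n. a ^ n * (phi (c i) * b ^ i)) = 0"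
    using pow_inv[OF ab(1), of n] by (simp add: distrib_left sum_distrib_left)
  moreover have "\<And>i. i < n \<Longrightarrow> a ^ n * (phi (c i) * b ^ i) = phi (c i) * a ^ (n - i)"
  proof -
    fix i assume "i < n"
    hence "a ^ n = a ^ (n - i) * a ^ i" by (simp add: power_add[symmetric])
    hence "a ^ n * (phi (c i) * b ^ i) = (a ^ (n - i) * a ^ i) * phi (c i) * b ^ i"
      by (simp add: mult.assoc)
    also have "\<dots> = (phi (c i) * (a ^ (n - i) * a ^ i)) * b ^ i"
      by (simp only: comm[of "c i" "a ^ (n - i) * a ^ i"])
    also have "\<dots> = phi (c i) * (a ^ (n - i) * (a ^ i * b ^ i))"
      by (simp only: mult.assoc)
    finally have "a ^ n * (phi (c i) * b ^ i) = phi (c i) * (a ^ (n - i) * (a ^ i * b ^ i))" .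
    thus "a ^ n * (phi (c i) * b ^ i) = phi (c i) * a ^ (n - i)"
      using pow_inv[OF ab(1), of i] by simp
  qed
  hence "(\<Sum>i<n. a ^ n * (phi (c i) * b ^ i)) = (\<Sum>i<n. phi (c i) * a ^ (n - i))"
    by (intro sum.cong) auto
  ultimately have "1 + (\<Sum>i<n. phi (c i) * a ^ (n - i)) = 0" by simp
  hence h1: "1 = - (\<Sum>i<n. phi (c i) * a ^ (n - i))" by (simp only: eq_neg_iff_add_eq_0)
  have h2: "- (\<Sum>i<n. phi (c i) * a ^ (n - i)) = (\<Sum>i<n. phi (- c i) * a ^ (n - i))"
    unfolding sum_negf[symmetric] phi_neg[OF am] by simp
  hence "1 = (\<Sum>i<n. phi (- c i) * a ^ (n - i))"
    using h1 h2 by simp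
  also have "\<dots> \<in> V"
    by (rule sum_in[OF sm]) (use sm pw in \<open>auto simp: r_submodule_def\<close>)
  finally show ?thesis .
qed

theorem proposition7p4:
  fixes phi :: "'r::comm_ring_1 \<Rightarrow> 'a::ring_1" and \<theta> :: mathieu_type
  assumes "algebra_map phi"
    and "integral_over phi"
    and "\<forall>a::'a. invertible_elem a \<or> nilpotent_elem a"
  shows "quasi_stable \<theta> phi"
proof -
  have key: "\<exists>N. \<forall>m\<ge>N. a ^ m = 0" if sm: "r_submodule phi V" and n1: "1 \<notin> V"
    and pw: "\<forall>m\<ge>1. a ^ m \<in> V" for V and a :: 'a
  proof (cases "invertible_elem a")
    case True
    then obtain b where "a * b = 1" "b * a = 1" unfolding invertible_elem_def by blast
    from inv_case[OF assms(1,2) sm this pw] n1 show ?thesis by simp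
  next
    case False
    then obtain n where "a ^ n = 0" using assms(3) unfolding nilpotent_elem_def by blast
    hence "\<forall>m\<ge>n. a ^ m = 0" by (auto simp: le_iff_add power_add)
    thus ?thesis by blast
  qed
  show ?thesis unfolding quasi_stable_def
  proof (intro allI impI)
    fix V :: "'a set" assume h: "r_submodule phi V \<and> 1 \<notin> V"
    hence z: "0 \<in> V" unfolding r_submodule_def by simp
    have K: "\<And>a. \<forall>m\<ge>1. a ^ m \<in> V \<Longrightarrow> \<exists>N. \<forall>m\<ge>N. a ^ m = 0"
      using key h by blast
    have L: "left_mathieu V" unfolding left_mathieu_def
    proof (intro allI impI)
      fix a b :: 'a assume "\<forall>m\<ge>1. a ^ m \<in> V"
      then obtain N where "\<forall>m\<ge>N. a ^ m = 0" using K by blast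
      hence "\<forall>m\<ge>N. b * a ^ m \<in> V" using z by auto
      thus "\<exists>N. \<forall>m\<ge>N. b * a ^ m \<in> V" by blast
    qed
    have R: "right_mathieu V" unfolding right_mathieu_def
    proof (intro allI impI)
      fix a b :: 'a assume "\<forall>m\<ge>1. a ^ m \<in> V"
      then obtain N where "\<forall>m\<ge>N. a ^ m = 0" using K by blast
      hence "\<forall>m\<ge>N. a ^ m * b \<in> V" using z by auto
      thus "\<exists>N. \<forall>m\<ge>N. a ^ m * b \<in> V" by blast
    qed
    have T: "two_sided_mathieu V" unfolding two_sided_mathieu_def
    proof (intro allI impI)
      fix a b c :: 'a assume "\<forall>m\<ge>1. a ^ m \<in> V"
      then obtain N where "\<forall>m\<ge>N. a ^ m = 0" using K by blast
      hence "\<forall>m\<ge>N. b * a ^ m * c \<in> V" using z by auto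
      thus "\<exists>N. \<forall>m\<ge>N. b * a ^ m * c \<in> V" by blast
    qed
    show "mathieu \<theta> V" using L R T by (cases \<theta>) auto
  qed
qed

end
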